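(* Let $\omega\colon\mathbf Z_+\to(0,+\infty)$ be a positive weight, and for $\mu\in\mathbf C$ and $m\ge1$ let \[h_m(\mu,z)=\sum_{n\ge0}\mu^n\big(z^{(6m+4)2^n}-z^{(2m+1)2^n}\big),\qquad h_0(\mu,z)=\sum_{n\ge0}\mu^nz^{2^{n+2}}.\] For every $m\ge0$ and $\mu\in\mathbf C$, $h_m(\mu,\cdot)$ belongs to $\mathcal X_\omega$ if and only if the series $\sum_{n\ge0}|\mu|^{2n}/\omega((2m+1)2^n)$ and $\sum_{n\ge0}|\mu|^{2n}/\omega((6m+4)2^n)$ converge; in this case $\mathcal Th_m(\mu,\cdot)=\mu h_m(\mu,\cdot)$. In particular, if $\omega$ is bounded from below then $h_m(\mu,\cdot)\in\mathcal X_\omega$ for every $m\ge0$ and every $\mu$ in the open unit disk $\mathbf D$; and if $\omega=\omega_0$, where $\omega_0(n)=(n+1)/\pi$, then $h_m(\mu,\cdot)\in\mathcal X_{\omega_0}$ for every $m\ge0$ and every $\mu\in\mathbf C$ with $|\mu|<\sqrt2$.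
   Context: $T\colon\mathbf Z_+\to\mathbf Z_+$ is the modified Collatz map: $T(n)=n/2$ for $n$ even, $T(n)=(3n+1)/2$ for $n$ odd. $\mathcal X_\omega$ is the Hilbert space of holomorphic functions $f(z)=\sum_{n\ge3}c_nz^n$ on the unit disk with $\|f\|_\omega^2=\sum_{n\ge3}|c_n|^2/\omega(n)<\infty$ (the quotient of the weighted Bergman space $\mathcal B^2_\omega$ by $\mathrm{span}[1,z,z^2]$). $\mathcal T$ acts on such power series by $\mathcal T\sum_{n\ge3}c_nz^n=\sum_{j\ge3,\,T(j)\ge3}c_jz^{T(j)}$, i.e. the coefficient of $z^k$ ($k\ge3$) in $\mathcal Tf$ is $\sum_{j\ge3,\,T(j)=k}c_j$. *)

theory Defs
  imports "HOL-Analysis.Analysis"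
begin

definition collatzT :: "nat \<Rightarrow> nat" where
  "collatzT n = (if even n then n div 2 else (3 * n + 1) div 2)"

definition tcoeff :: "(complex \<Rightarrow> complex) \<Rightarrow> nat \<Rightarrow> complex" where
  "tcoeff f n = (deriv ^^ n) f 0 / of_nat (fact n)"

definition in_X :: "(nat \<Rightarrow> real) \<Rightarrow> (complex \<Rightarrow> complex) \<Rightarrow> bool" where
  "in_X \<omega> f \<longleftrightarrow> f holomorphic_on ball 0 1 \<and> (\<forall>n<3. tcoeff f n = 0)
     \<and> summable (\<lambda>n. (cmod (tcoeff f n))\<^sup>2 / \<omega> n)"

definition collatz_op :: "(complex \<Rightarrow> complex) \<Rightarrow> complex \<Rightarrow> complex" where
  "collatz_op f z = (\<Sum>k. (if k \<ge> 3 then (\<Sum>j\<in>{j. 3 \<le> j \<and> collatzT j = k}. tcoeff f j) else 0) * z ^ k)"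

definition hfun :: "nat \<Rightarrow> complex \<Rightarrow> complex \<Rightarrow> complex" where
  "hfun m \<mu> z = (if m = 0 then (\<Sum>n. \<mu> ^ n * z ^ (2 ^ (n + 2)))
     else (\<Sum>n. \<mu> ^ n * (z ^ ((6 * m + 4) * 2 ^ n) - z ^ ((2 * m + 1) * 2 ^ n))))"

definition omega0 :: "nat \<Rightarrow> real" where
  "omega0 n = (real n + 1) / pi"

end

theory Submission
  imports Defs
begin

fun ca :: "nat \<Rightarrow> complex \<Rightarrow> nat \<Rightarrow> complex" where
  "ca b \<mu> k = (if k = b then 1 else if b < k \<and> even k then \<mu> * ca b \<mu> (k div 2) else 0)"

declare ca.simps[simp del]

lemma ca_less: "k < b \<Longrightarrow> ca b \<mu> k = 0"
  by (subst ca.simps) auto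

lemma ca_pow: "b \<ge> 1 \<Longrightarrow> ca b \<mu> (b * 2 ^ n) = \<mu> ^ n"
proof (induction n)
  case 0 then show ?case by (subst ca.simps) auto
next
  case (Suc n)
  have "b * 2 ^ Suc n \<noteq> b" "b < b * 2 ^ Suc n" using Suc.prems
    by (auto simp: less_le)
  then show ?case using Suc by (subst ca.simps) auto
qed

lemma ca_zero: "k \<notin> range (\<lambda>n. b * 2 ^ n) \<Longrightarrow> ca b \<mu> k = 0"
proof (induction k rule: less_induct)
  case (less k)
  have "k \<noteq> b" using less.prems by (metis power_0 mult_1_right rangeI)
  moreover have "b < k \<and> even k \<Longrightarrow> ca b \<mu> (k div 2) = 0"
  proof -
    assume h: "b < k \<and> even k"
    have "k div 2 \<notin> range (\<lambda>n. b * 2 ^ n)"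
    proof
      assume "k div 2 \<in> range (\<lambda>n. b * 2 ^ n)"
      then obtain n where "k div 2 = b * 2 ^ n" by auto
      then have "k = b * 2 ^ Suc n" using h by auto
      then show False using less.prems by (metis rangeI)
    qed
    then show ?thesis using less.IH h by auto
  qed
  ultimately show ?case by (subst ca.simps) auto
qed

lemma ca_double: assumes "b \<ge> 1" shows "ca b \<mu> (2 * k) = \<mu> * ca b \<mu> k + (if 2 * k = b then 1 else 0)"
proof (cases "2 * k = b")
  case True
  then have "k < b" using \<open>b \<ge> 1\<close> by auto
  then show ?thesis using True by (subst ca.simps) (simp add: ca_less)
next
  case False
  show ?thesis
  proof (cases "b < 2 * k")
    case True then show ?thesis using False by (subst ca.simps) auto
  next
    case F2: False
    then have "k < b \<or> k = 0" by auto
    then have "ca b \<mu> k = 0" using \<open>b \<ge> 1\<close> by (auto simp: ca_less)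
    then show ?thesis using False F2 by (subst ca.simps) auto
  qed
qed

lemma ca_odd: "odd k \<Longrightarrow> ca b \<mu> k = (if k = b then 1 else 0)"
  by (subst ca.simps) auto

lemma strict_mono_b2: "b \<ge> (1::nat) \<Longrightarrow> strict_mono (\<lambda>n. b * 2 ^ n)"
  by (intro strict_monoI) (simp add: power_strict_increasing)

lemma summable_lac:
  fixes z \<mu> :: complex
  assumes z: "norm z < 1" and b: "b \<ge> 1"
  shows "summable (\<lambda>n. \<mu> ^ n * z ^ (b * 2 ^ n))"
proof -
  have "(\<lambda>n. norm z ^ n) \<longlonglongrightarrow> 0" using z by (simp add: LIMSEQ_power_zero)
  then have "(\<lambda>n. norm \<mu> * norm z ^ n) \<longlonglongrightarrow> 0"
    using tendsto_mult_right_zero by blast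
  then have "eventually (\<lambda>n. norm \<mu> * norm z ^ n < 1/2) sequentially"
    by (rule order_tendstoD) simp
  then obtain N where N: "\<And>n. n \<ge> N \<Longrightarrow> norm \<mu> * norm z ^ n < 1/2"
    by (auto simp: eventually_sequentially)
  show ?thesis
  proof (rule summable_ratio_test[of "1/2" N])
    fix n assume n: "n \<ge> N"
    have e: "b * 2 ^ Suc n = b * 2 ^ n + b * 2 ^ n" by simp
    have "n \<le> b * 2 ^ n"
      using b by (metis less_exp mult_le_mono1 mult_1 less_imp_le_nat order_trans)
    then have "norm z ^ (b * 2 ^ n) \<le> norm z ^ n"
      using z by (intro power_decreasing) auto
    then have "norm \<mu> * norm z ^ (b * 2 ^ n) \<le> 1/2"
      using N[OF n] by (smt (verit) mult_left_mono norm_ge_zero)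
    then have "norm \<mu> * norm z ^ (b * 2 ^ n) * (norm \<mu> ^ n * norm z ^ (b * 2 ^ n))
       \<le> 1/2 * (norm \<mu> ^ n * norm z ^ (b * 2 ^ n))"
      by (intro mult_right_mono) auto
    then show "norm (\<mu> ^ Suc n * z ^ (b * 2 ^ Suc n)) \<le> 1/2 * norm (\<mu> ^ n * z ^ (b * 2 ^ n))"
      unfolding e by (simp add: norm_mult norm_power power_add algebra_simps)
  qed simp
qed

lemma ca_sums:
  fixes z \<mu> :: complex
  assumes z: "norm z < 1" and b: "b \<ge> 1"
  shows "(\<lambda>k. ca b \<mu> k * z ^ k) sums (\<Sum>n. \<mu> ^ n * z ^ (b * 2 ^ n))"
proof -
  have "(\<lambda>n. ca b \<mu> (b * 2 ^ n) * z ^ (b * 2 ^ n)) sums (\<Sum>n. \<mu> ^ n * z ^ (b * 2 ^ n))"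
    using summable_lac[OF z b] by (simp add: ca_pow[OF b] summable_sums)
  then show ?thesis
    using sums_mono_reindex[OF strict_mono_b2[OF b], of "\<lambda>k. ca b \<mu> k * z ^ k"]
    by (simp add: ca_zero)
qed

definition cc :: "nat \<Rightarrow> complex \<Rightarrow> nat \<Rightarrow> complex" where
  "cc m \<mu> k = (if m = 0 then ca 4 \<mu> k else ca (6 * m + 4) \<mu> k - ca (2 * m + 1) \<mu> k)"

lemma hfun_sums:
  assumes z: "norm z < 1"
  shows "(\<lambda>k. cc m \<mu> k * z ^ k) sums hfun m \<mu> z"
proof (cases "m = 0")
  case True
  have "(\<lambda>k. ca 4 \<mu> k * z ^ k) sums (\<Sum>n. \<mu> ^ n * z ^ (4 * 2 ^ n))"
    using ca_sums[OF z, of 4] by simp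
  moreover have "(\<lambda>n. \<mu> ^ n * z ^ (2 ^ (n + 2))) = (\<lambda>n. \<mu> ^ n * z ^ (4 * 2 ^ n))"
    by (simp add: power_add mult.commute)
  ultimately show ?thesis using True by (simp add: cc_def hfun_def)
next
  case False
  have "(\<lambda>k. ca (6 * m + 4) \<mu> k * z ^ k - ca (2 * m + 1) \<mu> k * z ^ k) sums
     ((\<Sum>n. \<mu> ^ n * z ^ ((6 * m + 4) * 2 ^ n)) - (\<Sum>n. \<mu> ^ n * z ^ ((2 * m + 1) * 2 ^ n)))"
    by (intro sums_diff ca_sums z) auto
  moreover have "(\<Sum>n. \<mu> ^ n * z ^ ((6 * m + 4) * 2 ^ n)) - (\<Sum>n. \<mu> ^ n * z ^ ((2 * m + 1) * 2 ^ n))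
     = (\<Sum>n. \<mu> ^ n * (z ^ ((6 * m + 4) * 2 ^ n) - z ^ ((2 * m + 1) * 2 ^ n)))"
    using suminf_diff[OF summable_lac[OF z, of "6*m+4" \<mu>] summable_lac[OF z, of "2*m+1" \<mu>]]
    by (simp only: right_diff_distrib)
  ultimately show ?thesis using False by (simp add: cc_def hfun_def algebra_simps)
qed

lemma hfun_fps:
  shows "fps_conv_radius (Abs_fps (cc m \<mu>)) \<ge> 1"
  unfolding fps_conv_radius_def
proof (rule conv_radius_geI_ex)
  fix r :: real assume r: "r > 0" "ereal r < 1"
  show "\<exists>z::complex. norm z = r \<and> summable (\<lambda>n. fps_nth (Abs_fps (cc m \<mu>)) n * z ^ n)"
    using r hfun_sums[of "of_real r" m \<mu>]
    by (intro exI[of _ "of_real r"]) (auto simp: sums_iff)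
qed

lemma hfun_eval: "norm z < 1 \<Longrightarrow> eval_fps (Abs_fps (cc m \<mu>)) z = hfun m \<mu> z"
  unfolding eval_fps_def using hfun_sums[of z m \<mu>] by (simp add: sums_iff)

lemma hfun_holo: "hfun m \<mu> holomorphic_on ball 0 1"
proof -
  have "eval_fps (Abs_fps (cc m \<mu>)) holomorphic_on ball 0 1"
  proof (intro holomorphic_on_eval_fps subsetI)
    fix x :: complex assume "x \<in> ball 0 1"
    then have "ereal (norm x) < 1" by simp
    then show "x \<in> eball 0 (fps_conv_radius (Abs_fps (cc m \<mu>)))"
      unfolding in_eball_iff dist_0_norm using hfun_fps[of m \<mu>] order.strict_trans2 by blast
  qed
  then show ?thesis by (rule holomorphic_cong[THEN iffD1, rotated 2]) (auto simp: hfun_eval)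
qed

lemma hfun_tcoeff: "tcoeff (hfun m \<mu>) n = cc m \<mu> n"
proof -
  have "hfun m \<mu> has_fps_expansion Abs_fps (cc m \<mu>)"
    unfolding has_fps_expansion_def
  proof
    show "0 < fps_conv_radius (Abs_fps (cc m \<mu>))"
      using hfun_fps[of m \<mu>] order.strict_trans2[of "0::ereal" 1] by simp
    have "eventually (\<lambda>z. z \<in> ball (0::complex) 1) (nhds 0)"
      by (intro eventually_nhds_in_open) auto
    then show "eventually (\<lambda>z. eval_fps (Abs_fps (cc m \<mu>)) z = hfun m \<mu> z) (nhds 0)"
      by eventually_elim (auto simp: hfun_eval)
  qed
  from fps_nth_fps_expansion[OF this, of n] show ?thesis by (simp add: tcoeff_def)
qed

lemma cc_small: "k < 3 \<Longrightarrow> cc m \<mu> k = 0"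
  by (auto simp: cc_def ca_less)

lemma cc_odd: "odd j \<Longrightarrow> cc m \<mu> j = (if m \<noteq> 0 \<and> j = 2 * m + 1 then -1 else 0)"
  by (auto simp: cc_def ca_odd)

lemma cc_double: "k \<ge> 3 \<Longrightarrow> cc m \<mu> (2 * k) = \<mu> * cc m \<mu> k + (if m \<noteq> 0 \<and> k = 3 * m + 2 then 1 else 0)"
proof -
  assume k: "k \<ge> 3"
  have a: "ca 4 \<mu> (2 * k) = \<mu> * ca 4 \<mu> k" using ca_double[of 4 \<mu> k] k by simp
  have b: "ca (6*m+4) \<mu> (2 * k) = \<mu> * ca (6*m+4) \<mu> k + (if k = 3 * m + 2 then 1 else 0)"
    using ca_double[of "6*m+4" \<mu> k] by simp
  have c: "ca (2*m+1) \<mu> (2 * k) = \<mu> * ca (2*m+1) \<mu> k"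
  proof -
    have "2 * k \<noteq> 2 * m + 1" by presburger
    then show ?thesis using ca_double[of "2*m+1" \<mu> k] by simp
  qed
  show ?thesis unfolding cc_def using a b c by (simp add: algebra_simps)
qed

lemma preim: "k \<ge> 3 \<Longrightarrow> {j. 3 \<le> j \<and> collatzT j = k} = insert (2 * k) {j. 3 \<le> j \<and> odd j \<and> 3 * j + 1 = 2 * k}"
  by (auto simp: collatzT_def; presburger)

lemma coeff_eq:
  assumes k: "k \<ge> 3"
  shows "(\<Sum>j\<in>{j. 3 \<le> j \<and> collatzT j = k}. cc m \<mu> j) = \<mu> * cc m \<mu> k"
proof -
  let ?O = "{j. 3 \<le> j \<and> odd j \<and> 3 * j + 1 = 2 * k}"
  have fin: "finite ?O" by (rule finite_subset[of _ "{..2*k}"]) auto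
  have "2 * k \<notin> ?O" by auto
  then have "(\<Sum>j\<in>{j. 3 \<le> j \<and> collatzT j = k}. cc m \<mu> j) = cc m \<mu> (2 * k) + (\<Sum>j\<in>?O. cc m \<mu> j)"
    using fin by (simp add: preim[OF k])
  also have "(\<Sum>j\<in>?O. cc m \<mu> j) = (\<Sum>j\<in>?O. if j = 2 * m + 1 then (if m \<noteq> 0 then -1 else 0) else 0)"
    by (intro sum.cong) (auto simp: cc_odd)
  also have "\<dots> = (if 2 * m + 1 \<in> ?O then (if m \<noteq> 0 then -1 else 0) else 0)"
    using fin by (simp add: sum.delta)
  also have "\<dots> = (if m \<noteq> 0 \<and> k = 3 * m + 2 then -1 else 0)"
    by auto
  finally show ?thesis using cc_double[OF k, of m \<mu>] by simp
qed

lemma collatz_hfun: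
  assumes z: "z \<in> ball 0 1"
  shows "collatz_op (hfun m \<mu>) z = \<mu> * hfun m \<mu> z"
proof -
  have "(\<lambda>k. (if k \<ge> 3 then (\<Sum>j\<in>{j. 3 \<le> j \<and> collatzT j = k}. tcoeff (hfun m \<mu>) j) else 0) * z ^ k)
      = (\<lambda>k. \<mu> * (cc m \<mu> k * z ^ k))"
    by (auto simp: hfun_tcoeff coeff_eq cc_small)
  moreover have "(\<lambda>k. \<mu> * (cc m \<mu> k * z ^ k)) sums (\<mu> * hfun m \<mu> z)"
    using z by (intro sums_mult hfun_sums) auto
  ultimately show ?thesis unfolding collatz_op_def by (simp add: sums_iff)
qed

lemma exps_ne:
  assumes m: "m \<ge> (1::nat)" shows "(6 * m + 4) * 2 ^ a \<noteq> (2 * m + 1) * 2 ^ b"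
proof
  assume eq: "(6 * m + 4) * 2 ^ a = (2 * m + 1) * 2 ^ b"
  have "(3 * m + 2) * 2 ^ (a + 1) = (6 * m + 4) * 2 ^ a" by (simp add: algebra_simps)
  also note eq
  finally have eq': "(3 * m + 2) * 2 ^ (a + 1) = (2 * m + 1) * 2 ^ b" .
  show False
  proof (cases "b \<le> a + 1")
    case True
    then obtain d where d: "a + 1 = b + d" using le_Suc_ex by blast
    have X: "(3 * m + 2) * 2 ^ d * 2 ^ b = (2 * m + 1) * 2 ^ b"
      using eq' unfolding d by (simp add: power_add algebra_simps)
    have h: "(2::nat) ^ b \<noteq> 0" by simp
    from X have "(3 * m + 2) * 2 ^ d = 2 * m + 1"
      by (simp only: mult_right_cancel[OF h])
    moreover have "(3 * m + 2) * 2 ^ d \<ge> 3 * m + 2"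
    proof -
      have "1 \<le> (2::nat) ^ d" by simp
      then show ?thesis using mult_le_mono2[of 1 "2^d" "3 * m + 2"] by simp
    qed
    ultimately show False by simp
  next
    case False
    then obtain d where d: "b = a + 1 + d" "d \<ge> 1" 
      using False by (intro that[of "b - (a + 1)"]) auto
    have X: "(3 * m + 2) * 2 ^ (a + 1) = (2 * m + 1) * 2 ^ d * 2 ^ (a + 1)"
      using eq' unfolding d by (simp add: power_add algebra_simps)
    have h: "(2::nat) ^ (a + 1) \<noteq> 0" by simp
    from X have e: "3 * m + 2 = (2 * m + 1) * 2 ^ d"
      by (simp only: mult_right_cancel[OF h])
    have "(2::nat) ^ d \<ge> 2" 
    proof -
      have "(2::nat) ^ 1 \<le> 2 ^ d" by (rule power_increasing[OF d(2)]) simp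
      then show ?thesis by simp
    qed
    then have "(2 * m + 1) * 2 ^ d \<ge> (2 * m + 1) * 2" by (intro mult_left_mono) auto
    then show False using e m by simp
  qed
qed

lemma ca_disj: "m \<ge> 1 \<Longrightarrow> ca (6 * m + 4) \<mu> k = 0 \<or> ca (2 * m + 1) \<mu> k = 0"
  using ca_zero[of k "6 * m + 4" \<mu>] ca_zero[of k "2 * m + 1" \<mu>] exps_ne by blast

lemma summable_add_nonneg_iff:
  fixes f g :: "nat \<Rightarrow> real"
  assumes "\<And>k. f k \<ge> 0" "\<And>k. g k \<ge> 0"
  shows "summable (\<lambda>k. f k + g k) \<longleftrightarrow> summable f \<and> summable g"
proof
  assume s: "summable (\<lambda>k. f k + g k)"
  have "summable f" by (rule summable_comparison_test[OF _ s]) (use assms in auto)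
  moreover have "summable g" by (rule summable_comparison_test[OF _ s]) (use assms in auto)
  ultimately show "summable f \<and> summable g" ..
qed (auto intro: summable_add)

context
  fixes \<omega> :: "nat \<Rightarrow> real"
  assumes pos: "\<forall>n\<ge>1. \<omega> n > 0"
begin

lemma ca_term_nonneg: "b \<ge> 1 \<Longrightarrow> 0 \<le> (cmod (ca b \<mu> k))\<^sup>2 / \<omega> k"
proof (cases "k = 0")
  case True
  assume "b \<ge> 1" then show ?thesis using True by (simp add: ca_less)
next
  case False
  then have "\<omega> k > 0" using pos by auto
  then show ?thesis by simp
qed

lemma ca_reindex:
  assumes b: "b \<ge> 1"
  shows "summable (\<lambda>k. (cmod (ca b \<mu> k))\<^sup>2 / \<omega> k) \<longleftrightarrow> summable (\<lambda>n. cmod \<mu> ^ (2 * n) / \<omega> (b * 2 ^ n))"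
  using summable_mono_reindex[OF strict_mono_b2[OF b], of "\<lambda>k. (cmod (ca b \<mu> k))\<^sup>2 / \<omega> k"]
  by (simp add: ca_zero ca_pow[OF b] norm_power power_even_eq)

lemma inX_iff:
  "in_X \<omega> (hfun m \<mu>) \<longleftrightarrow>
            summable (\<lambda>n. cmod \<mu> ^ (2 * n) / \<omega> ((2 * m + 1) * 2 ^ n)) \<and>
            summable (\<lambda>n. cmod \<mu> ^ (2 * n) / \<omega> ((6 * m + 4) * 2 ^ n))"
proof -
  have "in_X \<omega> (hfun m \<mu>) \<longleftrightarrow> summable (\<lambda>k. (cmod (cc m \<mu> k))\<^sup>2 / \<omega> k)"
    unfolding in_X_def by (simp add: hfun_holo hfun_tcoeff cc_small)
  also have "\<dots> \<longleftrightarrow> summable (\<lambda>n. cmod \<mu> ^ (2 * n) / \<omega> ((2 * m + 1) * 2 ^ n)) \<and>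
            summable (\<lambda>n. cmod \<mu> ^ (2 * n) / \<omega> ((6 * m + 4) * 2 ^ n))"
  proof (cases "m = 0")
    case True
    have "summable (\<lambda>n. cmod \<mu> ^ (2 * n) / \<omega> (4 * 2 ^ n)) \<Longrightarrow>
          summable (\<lambda>n. cmod \<mu> ^ (2 * n) / \<omega> (2 ^ n))"
    proof -
      assume s: "summable (\<lambda>n. cmod \<mu> ^ (2 * n) / \<omega> (4 * 2 ^ n))"
      have "summable (\<lambda>n. cmod \<mu> ^ 4 * (cmod \<mu> ^ (2 * n) / \<omega> (4 * 2 ^ n)))"
        using s by (rule summable_mult)
      moreover have "(\<lambda>n. cmod \<mu> ^ 4 * (cmod \<mu> ^ (2 * n) / \<omega> (4 * 2 ^ n))) =
                     (\<lambda>n. cmod \<mu> ^ (2 * (n + 2)) / \<omega> (2 ^ (n + 2)))"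
      proof
        fix n
        have "2 * (n + 2) = 4 + 2 * (n::nat)" by simp
        then have A: "cmod \<mu> ^ (2 * (n + 2)) = cmod \<mu> ^ 4 * cmod \<mu> ^ (2 * n)"
          by (simp only: power_add)
        have B: "(2::nat) ^ (n + 2) = 4 * 2 ^ n" by simp
        show "cmod \<mu> ^ 4 * (cmod \<mu> ^ (2 * n) / \<omega> (4 * 2 ^ n)) =
                     cmod \<mu> ^ (2 * (n + 2)) / \<omega> (2 ^ (n + 2))" by (simp only: A B times_divide_eq_right)
      qed
      ultimately show ?thesis using summable_iff_shift[of "\<lambda>n. cmod \<mu> ^ (2 * n) / \<omega> (2 ^ n)" 2] by simp
    qed
    then show ?thesis using True ca_reindex[of 4 \<mu>] by (auto simp: cc_def)
  next
    case False
    then have m: "m \<ge> 1" by simp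
    have "(\<lambda>k. (cmod (cc m \<mu> k))\<^sup>2 / \<omega> k) =
          (\<lambda>k. (cmod (ca (2 * m + 1) \<mu> k))\<^sup>2 / \<omega> k + (cmod (ca (6 * m + 4) \<mu> k))\<^sup>2 / \<omega> k)"
    proof
      fix k
      show "(cmod (cc m \<mu> k))\<^sup>2 / \<omega> k =
          (cmod (ca (2 * m + 1) \<mu> k))\<^sup>2 / \<omega> k + (cmod (ca (6 * m + 4) \<mu> k))\<^sup>2 / \<omega> k"
        using ca_disj[OF m, of \<mu> k] False by (auto simp: cc_def add_divide_distrib)
    qed
    then show ?thesis
      using summable_add_nonneg_iff[OF ca_term_nonneg ca_term_nonneg] ca_reindex m
      by simp
  qed
  finally show ?thesis .
qed

end

lemma part3_sum:
  fixes \<omega> :: "nat \<Rightarrow> real"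
  assumes b: "b \<ge> 1" and c: "c > 0" "\<forall>n\<ge>1. c \<le> \<omega> n" and mu: "cmod \<mu> < 1"
  shows "summable (\<lambda>n. cmod \<mu> ^ (2 * n) / \<omega> (b * 2 ^ n))"
proof (rule summable_comparison_test[of _ "\<lambda>n. (cmod \<mu> ^ 2) ^ n / c"])
  show "summable (\<lambda>n. (cmod \<mu> ^ 2) ^ n / c)"
    using mu by (intro summable_divide summable_geometric) (simp add: abs_square_less_1)
  show "\<exists>N. \<forall>n\<ge>N. norm (cmod \<mu> ^ (2 * n) / \<omega> (b * 2 ^ n)) \<le> (cmod \<mu> ^ 2) ^ n / c"
  proof (intro exI allI impI)
    fix n :: nat
    have "b * 2 ^ n \<ge> 1" using b by (simp add: Suc_le_eq)
    then have w: "c \<le> \<omega> (b * 2 ^ n)" using c by auto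
    then have "cmod \<mu> ^ (2 * n) / \<omega> (b * 2 ^ n) \<le> cmod \<mu> ^ (2 * n) / c"
      using c by (intro divide_left_mono) auto
    then show "norm (cmod \<mu> ^ (2 * n) / \<omega> (b * 2 ^ n)) \<le> (cmod \<mu> ^ 2) ^ n / c"
      using w c by (simp add: power_mult)
  qed
qed

lemma part4_sum:
  assumes b: "b \<ge> 1" and mu: "cmod \<mu> < sqrt 2"
  shows "summable (\<lambda>n. cmod \<mu> ^ (2 * n) / omega0 (b * 2 ^ n))"
proof (rule summable_comparison_test[of _ "\<lambda>n. pi * (cmod \<mu> ^ 2 / 2) ^ n"])
  have "cmod \<mu> ^ 2 < sqrt 2 ^ 2" using mu by (intro power_strict_mono) auto
  then have "cmod \<mu> ^ 2 < 2" by simp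
  then show "summable (\<lambda>n. pi * (cmod \<mu> ^ 2 / 2) ^ n)"
    by (intro summable_mult summable_geometric) simp
  show "\<exists>N. \<forall>n\<ge>N. norm (cmod \<mu> ^ (2 * n) / omega0 (b * 2 ^ n)) \<le> pi * (cmod \<mu> ^ 2 / 2) ^ n"
  proof (intro exI allI impI)
    fix n :: nat
    have "(1::real) * 2 ^ n \<le> real b * 2 ^ n" using b by (intro mult_right_mono) auto
    then have "(2::real) ^ n \<le> real (b * 2 ^ n)" by simp
    then have le: "(2::real) ^ n \<le> real (b * 2 ^ n) + 1" by linarith
    have "cmod \<mu> ^ (2 * n) / omega0 (b * 2 ^ n) = pi * cmod \<mu> ^ (2 * n) / (real (b * 2 ^ n) + 1)"
      by (simp add: omega0_def)
    also have "\<dots> \<le> pi * cmod \<mu> ^ (2 * n) / 2 ^ n"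
      using le by (intro divide_left_mono mult_pos_pos) (auto simp: add_nonneg_pos)
    also have "\<dots> = pi * (cmod \<mu> ^ 2 / 2) ^ n"
      by (simp add: power_mult power_divide)
    finally show "norm (cmod \<mu> ^ (2 * n) / omega0 (b * 2 ^ n)) \<le> pi * (cmod \<mu> ^ 2 / 2) ^ n"
      by (simp add: omega0_def)
  qed
qed

theorem proposition2p3:
  fixes \<omega> :: "nat \<Rightarrow> real"
  assumes pos: "\<forall>n\<ge>1. \<omega> n > 0"
  shows "(\<forall>m \<mu>. in_X \<omega> (hfun m \<mu>) \<longleftrightarrow>
            summable (\<lambda>n. cmod \<mu> ^ (2 * n) / \<omega> ((2 * m + 1) * 2 ^ n)) \<and>
            summable (\<lambda>n. cmod \<mu> ^ (2 * n) / \<omega> ((6 * m + 4) * 2 ^ n)))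
       \<and> (\<forall>m \<mu>. in_X \<omega> (hfun m \<mu>) \<longrightarrow>
            (\<forall>z\<in>ball 0 1. collatz_op (hfun m \<mu>) z = \<mu> * hfun m \<mu> z))
       \<and> ((\<exists>c>0. \<forall>n\<ge>1. c \<le> \<omega> n) \<longrightarrow>
            (\<forall>m \<mu>. cmod \<mu> < 1 \<longrightarrow> in_X \<omega> (hfun m \<mu>)))
       \<and> (\<forall>m \<mu>. cmod \<mu> < sqrt 2 \<longrightarrow> in_X omega0 (hfun m \<mu>))"
proof (intro conjI allI impI ballI)
  fix m \<mu>
  show "in_X \<omega> (hfun m \<mu>) \<longleftrightarrow>
            summable (\<lambda>n. cmod \<mu> ^ (2 * n) / \<omega> ((2 * m + 1) * 2 ^ n)) \<and>
            summable (\<lambda>n. cmod \<mu> ^ (2 * n) / \<omega> ((6 * m + 4) * 2 ^ n))"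
    by (rule inX_iff[OF pos])
next
  fix m \<mu> z assume "z \<in> ball (0::complex) 1"
  then show "collatz_op (hfun m \<mu>) z = \<mu> * hfun m \<mu> z" by (rule collatz_hfun)
next
  fix m \<mu> assume c: "\<exists>c>0. \<forall>n\<ge>1. c \<le> \<omega> n" and mu: "cmod \<mu> < 1"
  from c obtain c where "c > 0" "\<forall>n\<ge>1. c \<le> \<omega> n" by blast
  then show "in_X \<omega> (hfun m \<mu>)"
    using mu part3_sum[of "2 * m + 1" c \<omega> \<mu>] part3_sum[of "6 * m + 4" c \<omega> \<mu>] inX_iff[OF pos, of m \<mu>]
    by auto
next
  fix m \<mu> assume mu: "cmod \<mu> < sqrt 2"
  have p0: "\<forall>n\<ge>1. omega0 n > 0" by (simp add: omega0_def)
  show "in_X omega0 (hfun m \<mu>)"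
    using mu part4_sum[of "2 * m + 1" \<mu>] part4_sum[of "6 * m + 4" \<mu>] inX_iff[OF p0, of m \<mu>]
    by auto
qed

end
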